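(* Let $A$, $S_1$, $S_2$, $Y$ be random variables and suppose: (i) there exist random variables $(S_1(a),U_2(a),S_2(u_2),Y(s_1,s_2,u_2): a,s_1,s_2,u_2)$ with $S_1=S_1(A)$, $S_2=S_2(U_2)$, $Y=Y(S_1,S_2,U_2)$, where $U_2:=U_2(A)$; (ii) there is a random variable $U_1$ such that for all $a,s_1,s_2,u_2$: $(U_1,Y(s_1,s_2,u_2),S_1(a))\perp(U_2(a),S_2(u_2))$, $Y(s_1,s_2,u_2)\perp S_1(a)\mid U_1$, and $U_2(a)\perp S_2(u_2)$; (iii) $A\perp(U_1,U_2(a),S_1(a),S_2(u_2),Y(s_1,s_2,u_2): a,s_1,s_2,u_2)$. Then $(U_2,S_1)\perp S_2(u_2)$ for every $u_2$.
   Context: $\perp$ denotes statistical independence; $A$ is a randomized treatment (cell assignment), $S_1,S_2$ short-term metrics, $Y$ a long-term outcome, $U_1,U_2$ unobserved variables. *)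

theory Defs
  imports "HOL-Probability.Probability"
begin

definition gen_events :: "'o measure \<Rightarrow> 'b measure \<Rightarrow> ('o \<Rightarrow> 'b) \<Rightarrow> 'o set set" where
  "gen_events M N X = {X -` B \<inter> space M | B. B \<in> sets N}"

text \<open>Independence of two random variables with possibly different codomain types
  (the library's indep_var requires equal codomain types): the sigma-algebras generated
  by X and Y are independent.\<close>
definition indep_rv ::
  "'o measure \<Rightarrow> 'x measure \<Rightarrow> ('o \<Rightarrow> 'x) \<Rightarrow> 'y measure \<Rightarrow> ('o \<Rightarrow> 'y) \<Rightarrow> bool" where
  "indep_rv M MX X MY Y \<longleftrightarrow>
     X \<in> measurable M MX \<and> Y \<in> measurable M MY \<and>
     prob_space.indep_set M (gen_events M MX X) (gen_events M MY Y)"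

definition cond_indep_var ::
  "'o measure \<Rightarrow> 'x measure \<Rightarrow> ('o \<Rightarrow> 'x) \<Rightarrow> 'y measure \<Rightarrow> ('o \<Rightarrow> 'y)
     \<Rightarrow> 'z measure \<Rightarrow> ('o \<Rightarrow> 'z) \<Rightarrow> bool" where
  "cond_indep_var M MX X MY Y MZ Z \<longleftrightarrow>
     X \<in> measurable M MX \<and> Y \<in> measurable M MY \<and> Z \<in> measurable M MZ \<and>
     (\<forall>B\<in>sets MX. \<forall>C\<in>sets MY. AE \<omega> in M.
        real_cond_exp M (vimage_algebra (space M) Z MZ)
          (\<lambda>\<omega>. indicator B (X \<omega>) * indicator C (Y \<omega>)) \<omega>
      = real_cond_exp M (vimage_algebra (space M) Z MZ) (\<lambda>\<omega>. indicator B (X \<omega>)) \<omega>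
        * real_cond_exp M (vimage_algebra (space M) Z MZ) (\<lambda>\<omega>. indicator C (Y \<omega>)) \<omega>)"

end

theory Submission
  imports Defs
begin

lemma indep_rv_prob:
  assumes P: "prob_space M" and I: "indep_rv M MX X MY Y"
    and B: "B \<in> sets MX" and C: "C \<in> sets MY"
  shows "measure M ((X -` B \<inter> space M) \<inter> (Y -` C \<inter> space M))
       = measure M (X -` B \<inter> space M) * measure M (Y -` C \<inter> space M)"
proof -
  interpret prob_space M by (rule P)
  have "X -` B \<inter> space M \<in> gen_events M MX X" unfolding gen_events_def using B by blast
  moreover have "Y -` C \<inter> space M \<in> gen_events M MY Y" unfolding gen_events_def using C by blast
  ultimately show ?thesis using I unfolding indep_rv_def by (blast intro: indep_setD)
qed

lemma gen_events_sets:
  assumes "X \<in> measurable M N" shows "gen_events M N X \<subseteq> sets M"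
  using assms unfolding gen_events_def by (auto intro: measurable_sets)

lemma gen_events_sigma:
  assumes "X \<in> measurable M N" "sets N = sigma_sets (space N) G"
  shows "gen_events M N X = sigma_sets (space M) {X -` E \<inter> space M | E. E \<in> G}"
proof -
  have "X \<in> space M \<rightarrow> space N" using measurable_space[OF assms(1)] by auto
  then show ?thesis unfolding gen_events_def assms(2) by (rule sigma_sets_vimage_commute)
qed

theorem lemma1:
  fixes M :: "'o measure"
    and MS1 :: "'s1 measure" and MS2 :: "'s2 measure" and MU2 :: "'u2 measure"
    and MY :: "'y measure" and MU1 :: "'u1 measure"
    and A :: "'o \<Rightarrow> 'a::countable"
    and S1o :: "'o \<Rightarrow> 's1" and S2o :: "'o \<Rightarrow> 's2" and Yo :: "'o \<Rightarrow> 'y"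
    and S1 :: "'a \<Rightarrow> 'o \<Rightarrow> 's1" and U2 :: "'a \<Rightarrow> 'o \<Rightarrow> 'u2"
    and S2 :: "'u2 \<Rightarrow> 'o \<Rightarrow> 's2" and Y :: "'s1 \<Rightarrow> 's2 \<Rightarrow> 'u2 \<Rightarrow> 'o \<Rightarrow> 'y"
    and U1 :: "'o \<Rightarrow> 'u1"
  assumes M: "prob_space M"
    \<comment> \<open>observed random variables\<close>
    and rvA: "A \<in> measurable M (count_space UNIV)"
    and rvS1o: "S1o \<in> measurable M MS1"
    and rvS2o: "S2o \<in> measurable M MS2"
    and rvYo: "Yo \<in> measurable M MY"
    \<comment> \<open>(i) potential outcomes are random variables, and consistency\<close>
    and rvS1: "\<And>a. S1 a \<in> measurable M MS1"
    and rvU2: "\<And>a. U2 a \<in> measurable M MU2"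
    and rvS2: "\<And>u2. u2 \<in> space MU2 \<Longrightarrow> S2 u2 \<in> measurable M MS2"
    and rvY: "\<And>s1 s2 u2. s1 \<in> space MS1 \<Longrightarrow> s2 \<in> space MS2 \<Longrightarrow> u2 \<in> space MU2
                \<Longrightarrow> Y s1 s2 u2 \<in> measurable M MY"
    and consS1: "\<And>\<omega>. \<omega> \<in> space M \<Longrightarrow> S1o \<omega> = S1 (A \<omega>) \<omega>"
    and consS2: "\<And>\<omega>. \<omega> \<in> space M \<Longrightarrow> S2o \<omega> = S2 (U2 (A \<omega>) \<omega>) \<omega>"
    and consY: "\<And>\<omega>. \<omega> \<in> space M \<Longrightarrow> Yo \<omega> = Y (S1o \<omega>) (S2o \<omega>) (U2 (A \<omega>) \<omega>) \<omega>"
    \<comment> \<open>(ii)\<close>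
    and rvU1: "U1 \<in> measurable M MU1"
    and ii1: "\<And>a s1 s2 u2. s1 \<in> space MS1 \<Longrightarrow> s2 \<in> space MS2 \<Longrightarrow> u2 \<in> space MU2 \<Longrightarrow>
       indep_rv M
         (MU1 \<Otimes>\<^sub>M (MY \<Otimes>\<^sub>M MS1)) (\<lambda>\<omega>. (U1 \<omega>, Y s1 s2 u2 \<omega>, S1 a \<omega>))
         (MU2 \<Otimes>\<^sub>M MS2) (\<lambda>\<omega>. (U2 a \<omega>, S2 u2 \<omega>))"
    and ii2: "\<And>a s1 s2 u2. s1 \<in> space MS1 \<Longrightarrow> s2 \<in> space MS2 \<Longrightarrow> u2 \<in> space MU2 \<Longrightarrow>
       cond_indep_var M MY (Y s1 s2 u2) MS1 (S1 a) MU1 U1"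
    and ii3: "\<And>a u2. u2 \<in> space MU2 \<Longrightarrow>
       indep_rv M MU2 (U2 a) MS2 (S2 u2)"
    \<comment> \<open>(iii) A is independent of the sigma-algebra generated by the whole family\<close>
    and iii: "prob_space.indep_set M (gen_events M (count_space UNIV) A)
       (sigma_sets (space M)
          (gen_events M MU1 U1
           \<union> (\<Union>a. gen_events M MU2 (U2 a))
           \<union> (\<Union>a. gen_events M MS1 (S1 a))
           \<union> (\<Union>u2\<in>space MU2. gen_events M MS2 (S2 u2))
           \<union> (\<Union>s1\<in>space MS1. \<Union>s2\<in>space MS2. \<Union>u2\<in>space MU2.
                 gen_events M MY (Y s1 s2 u2))))"
  shows "\<forall>u2\<in>space MU2.
     indep_rv M (MU2 \<Otimes>\<^sub>M MS1) (\<lambda>\<omega>. (U2 (A \<omega>) \<omega>, S1o \<omega>)) MS2 (S2 u2)"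
proof
  fix u2 assume u2: "u2 \<in> space MU2"
  interpret prob_space M by (rule M)
  define P where "P = (\<lambda>\<omega>. (U2 (A \<omega>) \<omega>, S1o \<omega>))"
  have mU2A: "(\<lambda>\<omega>. U2 (A \<omega>) \<omega>) \<in> measurable M MU2"
    by (rule measurable_compose_countable'[where I=UNIV]) (auto intro: rvU2 rvA)
  have mP: "P \<in> measurable M (MU2 \<Otimes>\<^sub>M MS1)"
    unfolding P_def using mU2A rvS1o by (rule measurable_Pair)
  have mS2: "S2 u2 \<in> measurable M MS2" using rvS2 u2 .
  obtain \<omega>0 where \<omega>0: "\<omega>0 \<in> space M" using not_empty by blast
  have s1: "S1 undefined \<omega>0 \<in> space MS1" using rvS1 \<omega>0 by (rule measurable_space)
  have s2: "S2 u2 \<omega>0 \<in> space MS2" using mS2 \<omega>0 by (rule measurable_space)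
  define G where "G = gen_events M MU1 U1
           \<union> (\<Union>a. gen_events M MU2 (U2 a))
           \<union> (\<Union>a. gen_events M MS1 (S1 a))
           \<union> (\<Union>u2\<in>space MU2. gen_events M MS2 (S2 u2))
           \<union> (\<Union>s1\<in>space MS1. \<Union>s2\<in>space MS2. \<Union>u2\<in>space MU2.
                 gen_events M MY (Y s1 s2 u2))"
  have GP: "G \<subseteq> Pow (space M)" unfolding G_def gen_events_def by auto
  interpret SG: sigma_algebra "space M" "sigma_sets (space M) G"
    using GP by (rule sigma_algebra_sigma_sets)
  have iiiG: "indep_set (gen_events M (count_space UNIV) A) (sigma_sets (space M) G)"
    using iii unfolding G_def .
  define R where "R = {P -` E \<inter> space M | E. E \<in> {a \<times> b | a b. a \<in> sets MU2 \<and> b \<in> sets MS1}}"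
  have genP: "gen_events M (MU2 \<Otimes>\<^sub>M MS1) P = sigma_sets (space M) R"
    unfolding R_def by (rule gen_events_sigma[OF mP sets_pair_measure[folded space_pair_measure]])
  have genS2: "gen_events M MS2 (S2 u2) = sigma_sets (space M) (gen_events M MS2 (S2 u2))"
    using gen_events_sigma[OF mS2 sets.sigma_sets_eq[symmetric]] unfolding gen_events_def by simp
  have key: "prob ((P -` (B \<times> C) \<inter> space M) \<inter> (S2 u2 -` D \<inter> space M))
      = prob (P -` (B \<times> C) \<inter> space M) * prob (S2 u2 -` D \<inter> space M)"
    if B: "B \<in> sets MU2" and C: "C \<in> sets MS1" and D: "D \<in> sets MS2" for B C D
  proof -
    define Ev where "Ev a = A -` {a} \<inter> space M" for a
    define E where "E a = U2 a -` B \<inter> S1 a -` C \<inter> space M" for a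
    define T where "T = S2 u2 -` D \<inter> space M"
    define X where "X = P -` (B \<times> C) \<inter> space M"
    have XU: "X = (\<Union>a. Ev a \<inter> E a)"
      unfolding X_def Ev_def E_def P_def using consS1 by auto
    have XTU: "X \<inter> T = (\<Union>a. Ev a \<inter> (E a \<inter> T))"
      unfolding XU by auto
    have EvG: "Ev a \<in> gen_events M (count_space UNIV) A" for a
      unfolding Ev_def gen_events_def by auto
    have f1: "prob (Ev a \<inter> Z) = prob (Ev a) * prob Z" if "Z \<in> sigma_sets (space M) G" for a Z
      using indep_setD[OF iiiG EvG that] .
    have U2G: "U2 a -` B \<inter> space M \<in> sigma_sets (space M) G" for a
    proof (rule sigma_sets.Basic)
      have "U2 a -` B \<inter> space M \<in> gen_events M MU2 (U2 a)" unfolding gen_events_def using B by blast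
      then show "U2 a -` B \<inter> space M \<in> G" unfolding G_def by blast
    qed
    have S1G: "S1 a -` C \<inter> space M \<in> sigma_sets (space M) G" for a
    proof (rule sigma_sets.Basic)
      have "S1 a -` C \<inter> space M \<in> gen_events M MS1 (S1 a)" unfolding gen_events_def using C by blast
      then show "S1 a -` C \<inter> space M \<in> G" unfolding G_def by blast
    qed
    have TG: "T \<in> sigma_sets (space M) G"
    proof (rule sigma_sets.Basic)
      have "T \<in> gen_events M MS2 (S2 u2)" unfolding gen_events_def T_def using D by blast
      then show "T \<in> G" unfolding G_def using u2 by blast
    qed
    have EG: "E a \<in> sigma_sets (space M) G" for a
    proof -
      have "E a = (U2 a -` B \<inter> space M) \<inter> (S1 a -` C \<inter> space M)" unfolding E_def by auto
      then show ?thesis using SG.Int[OF U2G S1G] by simp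
    qed
    have ETG: "E a \<inter> T \<in> sigma_sets (space M) G" for a
      using SG.Int[OF EG TG] .
    have f3: "prob (E a \<inter> T) = prob (E a) * prob T" for a
    proof -
      let ?s1 = "S1 undefined \<omega>0" and ?s2 = "S2 u2 \<omega>0"
      have I1: "indep_rv M
         (MU1 \<Otimes>\<^sub>M (MY \<Otimes>\<^sub>M MS1)) (\<lambda>\<omega>. (U1 \<omega>, Y ?s1 ?s2 u2 \<omega>, S1 a \<omega>))
         (MU2 \<Otimes>\<^sub>M MS2) (\<lambda>\<omega>. (U2 a \<omega>, S2 u2 \<omega>))"
        using ii1[OF s1 s2 u2] .
      have mY: "Y ?s1 ?s2 u2 \<in> measurable M MY" using rvY[OF s1 s2 u2] .
      have C': "space MU1 \<times> (space MY \<times> C) \<in> sets (MU1 \<Otimes>\<^sub>M (MY \<Otimes>\<^sub>M MS1))"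
        using C by auto
      have eqW: "(\<lambda>\<omega>. (U1 \<omega>, Y ?s1 ?s2 u2 \<omega>, S1 a \<omega>)) -` (space MU1 \<times> (space MY \<times> C)) \<inter> space M
           = S1 a -` C \<inter> space M"
        using measurable_space[OF rvU1] measurable_space[OF mY] by auto
      have eqV1: "(\<lambda>\<omega>. (U2 a \<omega>, S2 u2 \<omega>)) -` (B \<times> D) \<inter> space M = U2 a -` B \<inter> space M \<inter> T"
        unfolding T_def by auto
      have eqV2: "(\<lambda>\<omega>. (U2 a \<omega>, S2 u2 \<omega>)) -` (B \<times> space MS2) \<inter> space M = U2 a -` B \<inter> space M"
        using measurable_space[OF mS2] by auto
      have p1: "prob (S1 a -` C \<inter> space M \<inter> (U2 a -` B \<inter> space M \<inter> T))
          = prob (S1 a -` C \<inter> space M) * prob (U2 a -` B \<inter> space M \<inter> T)"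
      proof -
        have "B \<times> D \<in> sets (MU2 \<Otimes>\<^sub>M MS2)" using B D by auto
        from indep_rv_prob[OF M I1 C' this] show ?thesis unfolding eqW eqV1 .
      qed
      have p2: "prob (S1 a -` C \<inter> space M \<inter> (U2 a -` B \<inter> space M))
          = prob (S1 a -` C \<inter> space M) * prob (U2 a -` B \<inter> space M)"
      proof -
        have "B \<times> space MS2 \<in> sets (MU2 \<Otimes>\<^sub>M MS2)" using B by auto
        from indep_rv_prob[OF M I1 C' this] show ?thesis unfolding eqW eqV2 .
      qed
      have p3: "prob (U2 a -` B \<inter> space M \<inter> T) = prob (U2 a -` B \<inter> space M) * prob T"
        using indep_rv_prob[OF M ii3[OF u2] B D] unfolding T_def .
      have e1: "E a \<inter> T = S1 a -` C \<inter> space M \<inter> (U2 a -` B \<inter> space M \<inter> T)"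
        unfolding E_def T_def by auto
      have e2: "E a = S1 a -` C \<inter> space M \<inter> (U2 a -` B \<inter> space M)"
        unfolding E_def by auto
      show ?thesis unfolding e1 p1 p3 by (subst e2, subst p2) simp
    qed
    have evs: "Ev a \<inter> Z \<in> events" if "Z \<in> sigma_sets (space M) G" for a Z
    proof -
      have "sigma_sets (space M) G \<subseteq> events"
      proof (rule sets.sigma_sets_subset)
        show "G \<subseteq> events" unfolding G_def
          by (intro Un_least UN_least gen_events_sets rvU1 rvU2 rvS1 rvS2 rvY) auto
      qed
      moreover have "Ev a \<in> events" unfolding Ev_def using rvA by (intro measurable_sets) auto
      ultimately show ?thesis using that by auto
    qed
    have disj: "disjoint_family (\<lambda>a. Ev a \<inter> Z a)" for Z
      unfolding disjoint_family_on_def Ev_def by auto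
    have "emeasure M (X \<inter> T) = (\<integral>\<^sup>+a. emeasure M (Ev a \<inter> (E a \<inter> T)) \<partial>count_space UNIV)"
      unfolding XTU by (rule emeasure_UN_countable) (auto intro: evs ETG disj[of "\<lambda>a. E a \<inter> T", simplified])
    also have "\<dots> = (\<integral>\<^sup>+a. emeasure M (Ev a \<inter> E a) * ennreal (prob T) \<partial>count_space UNIV)"
      by (intro nn_integral_cong)
         (simp add: emeasure_eq_measure f1 ETG EG f3 ennreal_mult[symmetric] mult.assoc)
    also have "\<dots> = (\<integral>\<^sup>+a. emeasure M (Ev a \<inter> E a) \<partial>count_space UNIV) * ennreal (prob T)"
      by (rule nn_integral_multc) simp
    also have "(\<integral>\<^sup>+a. emeasure M (Ev a \<inter> E a) \<partial>count_space UNIV) = emeasure M X"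
      unfolding XU by (rule emeasure_UN_countable[symmetric]) (auto intro: evs EG disj[of E, simplified])
    finally have "ennreal (prob (X \<inter> T)) = ennreal (prob X * prob T)"
      by (simp add: emeasure_eq_measure ennreal_mult)
    then show ?thesis unfolding X_def T_def by simp
  qed
  show "indep_rv M (MU2 \<Otimes>\<^sub>M MS1) (\<lambda>\<omega>. (U2 (A \<omega>) \<omega>, S1o \<omega>)) MS2 (S2 u2)"
    unfolding indep_rv_def P_def[symmetric]
  proof (intro conjI mP mS2)
    have "indep_set R (gen_events M MS2 (S2 u2))"
    proof (rule indep_setI)
      show "R \<subseteq> events" unfolding R_def using mP by (auto intro: measurable_sets)
      show "gen_events M MS2 (S2 u2) \<subseteq> events" unfolding gen_events_def
        using mS2 by (auto intro: measurable_sets)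
      show "prob (a \<inter> b) = prob a * prob b"
        if "a \<in> R" "b \<in> gen_events M MS2 (S2 u2)" for a b
        using that key unfolding R_def gen_events_def by blast
    qed
    then have "indep_set (sigma_sets (space M) R) (sigma_sets (space M) (gen_events M MS2 (S2 u2)))"
    proof (rule indep_set_sigma_sets)
      show "Int_stable R" unfolding Int_stable_def R_def
      proof safe
        fix B C B' C' assume "B \<in> sets MU2" "C \<in> sets MS1" "B' \<in> sets MU2" "C' \<in> sets MS1"
        then show "\<exists>E. (P -` (B \<times> C) \<inter> space M) \<inter> (P -` (B' \<times> C') \<inter> space M) = P -` E \<inter> space M
            \<and> E \<in> {a \<times> b |a b. a \<in> sets MU2 \<and> b \<in> sets MS1}"
          by (intro exI[of _ "(B \<inter> B') \<times> (C \<inter> C')"]) auto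
      qed
      show "Int_stable (gen_events M MS2 (S2 u2))" unfolding Int_stable_def gen_events_def
      proof safe
        fix B C assume "B \<in> sets MS2" "C \<in> sets MS2"
        then show "\<exists>E. (S2 u2 -` B \<inter> space M) \<inter> (S2 u2 -` C \<inter> space M) = S2 u2 -` E \<inter> space M
            \<and> E \<in> sets MS2"
          by (intro exI[of _ "B \<inter> C"]) auto
      qed
    qed
    then show "indep_set (gen_events M (MU2 \<Otimes>\<^sub>M MS1) P) (gen_events M MS2 (S2 u2))"
      unfolding genP genS2[symmetric] .
  qed
qed


end
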